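(* Let $i\in\{1,2\}$ and let \[ F_i(x,q)=\sum_{\lambda\in\mathcal{S}}x^{\ell(\lambda)}q^{|\lambda|_i}, \] where $\mathcal{S}$ is the set of strict partitions. Then \[ q^{3}F_i(x,q) = (1+q^{3}-xq^{3}+xq^{6}+x^{2}q^{7}+x^{2}q^{8})\,F_i(xq^{3},q) -(1-xq^3)(1+xq^6)(1-x^2q^9)\,F_i(xq^{6},q). \]
   Context: A strict partition is a partition with distinct parts (including the empty partition); $\ell(\lambda)$ denotes its number of parts (rows). Identify $\lambda$ with its Young diagram; the box in row $j$ and column $k$ has residue $k-j \bmod 2$. For $i\in\{1,2\}$, $|\lambda|_i$ is the number of boxes of $\lambda$, where boxes whose residue is congruent to $i$ modulo $2$ are counted twice (so for $i=1$ boxes with $k-j$ odd count twice, for $i=2$ boxes with $k-j$ even count twice). *)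

theory Defs
  imports "HOL-Analysis.Analysis"
begin

text \<open>A strict partition is represented by the list of its parts in strictly
decreasing order, all parts positive (the empty list is the empty partition).
The number of parts is the length of the list.\<close>

definition strict_partitions :: "nat list set" where
  "strict_partitions = {lam. sorted_wrt (>) lam \<and> (\<forall>p\<in>set lam. 0 < p)}"

text \<open>Weighted size: row j (1-based) and column k (1-based) gives the box with
residue k - j mod 2; boxes whose residue is congruent to i mod 2 count twice.\<close>

definition wsize :: "nat \<Rightarrow> nat list \<Rightarrow> nat" where
  "wsize i lam = (\<Sum>j<length lam. \<Sum>k\<in>{1..lam ! j}.
      (if (int k - int (j + 1)) mod 2 = int i mod 2 then 2 else 1))"

text \<open>The generating function, as an (absolutely convergent for norm q < 1) sum.\<close>

definition Fgen :: "nat \<Rightarrow> complex \<Rightarrow> complex \<Rightarrow> complex" where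
  "Fgen i x q = (\<Sum>\<^sub>\<infinity>lam\<in>strict_partitions. x ^ length lam * q ^ wsize i lam)"

end

theory Submission
  imports Defs
begin


definition rw :: "nat \<Rightarrow> nat \<Rightarrow> nat \<Rightarrow> nat" where
  "rw i j L = (\<Sum>k\<in>{1..L}. if (int k - int (j + 1)) mod 2 = int i mod 2 then 2 else 1)"

lemma wsize_rw: "wsize i lam = (\<Sum>j<length lam. rw i j (lam ! j))"
  unfolding wsize_def rw_def by simp

lemma rw_add2: "rw i j (L+2) = rw i j L + 3"
proof -
  have "{1..L+2} = insert (L+2) (insert (L+1) {1..L})" by auto
  then show ?thesis unfolding rw_def by simp presburger
qed

lemma rw_SS: "rw i j (Suc (Suc L)) = rw i j L + 3"
  using rw_add2[of i j L] by simp

lemma rw_1: "rw i j 1 = (if even (j+i) then 2 else 1)"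
  unfolding rw_def by simp presburger

lemma rw_ge: "rw i j L \<ge> L"
proof -
  have "(\<Sum>k\<in>{1..L}. (1::nat)) \<le> rw i j L" unfolding rw_def by (rule sum_mono) auto
  then show ?thesis by simp
qed

lemma wsize_map2: "wsize i (map (\<lambda>p. p+2) mu) = wsize i mu + 3 * length mu"
  unfolding wsize_rw by (simp add: rw_SS sum.distrib)

lemma wsize_snoc: "wsize i (xs @ [a]) = wsize i xs + rw i (length xs) a"
  unfolding wsize_rw by (simp add: nth_append)

lemma wsize_ge: "wsize i lam \<ge> sum_list lam"
  unfolding wsize_rw sum_list_sum_nth atLeast0LessThan by (rule sum_mono) (rule rw_ge)

abbreviation "T \<equiv> strict_partitions"

definition h0 :: "nat list \<Rightarrow> nat list" where "h0 mu = map (\<lambda>p. p+2) mu"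

lemma T_iff: "lam \<in> T \<longleftrightarrow> sorted_wrt (>) lam \<and> (\<forall>p\<in>set lam. 0 < p)"
  unfolding strict_partitions_def by simp

lemma h0_T: "mu \<in> T \<Longrightarrow> h0 mu \<in> T"
  unfolding T_iff h0_def by (simp add: sorted_wrt_map)

lemma h0_ge3: "mu \<in> T \<Longrightarrow> p \<in> set (h0 mu) \<Longrightarrow> 3 \<le> p"
  unfolding T_iff h0_def by auto

lemma h0_snoc_T: "mu \<in> T \<Longrightarrow> c \<in> T \<Longrightarrow> (\<forall>p\<in>set c. p \<le> 2) \<Longrightarrow> h0 mu @ c \<in> T"
proof -
  assume a: "mu \<in> T" "c \<in> T" "\<forall>p\<in>set c. p \<le> 2"
  have "\<forall>x\<in>set (h0 mu). \<forall>y\<in>set c. y < x"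
  proof (intro ballI)
    fix x y assume "x \<in> set (h0 mu)" "y \<in> set c"
    then have "3 \<le> x" "y \<le> 2" using h0_ge3[OF a(1)] a(3) by auto
    then show "y < x" by linarith
  qed
  then show ?thesis using h0_T[OF a(1)] a(2) unfolding T_iff sorted_wrt_append by auto
qed

lemma down_T:
  assumes "sorted_wrt (>) xs" "\<forall>p\<in>set xs. 3 \<le> p"
  shows "map (\<lambda>p. p-2) xs \<in> T \<and> h0 (map (\<lambda>p. p-2) xs) = xs"
proof
  show "map (\<lambda>p. p-2) xs \<in> T" using assms unfolding T_iff
  proof (intro conjI ballI)
    show "sorted_wrt (>) (map (\<lambda>p. p-2) xs)" unfolding sorted_wrt_map
      by (rule sorted_wrt_mono_rel[OF _ assms(1)]) (use assms(2) in auto)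
  qed (use assms(2) in auto)
  show "h0 (map (\<lambda>p. p-2) xs) = xs" unfolding h0_def using assms(2)
    by (induction xs) auto
qed

lemma T_decomp:
  assumes "lam \<in> T"
  shows "\<exists>mu\<in>T. lam = h0 mu \<or> lam = h0 mu @ [2] \<or> lam = h0 mu @ [1] \<or> lam = h0 mu @ [2,1]"
proof (cases lam rule: rev_exhaust)
  case Nil
  then show ?thesis by (intro bexI[of _ "[]"]) (auto simp: h0_def T_iff)
next
  case (snoc xs a)
  have s: "sorted_wrt (>) (xs @ [a])" and pos: "\<forall>p\<in>set (xs@[a]). 0 < p"
    using assms snoc unfolding T_iff by auto
  have xa: "\<forall>p\<in>set xs. a < p" and sx: "sorted_wrt (>) xs" using s by (auto simp: sorted_wrt_append)
  consider "a \<ge> 3" | "a = 2" | "a = 1" using pos by force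
  then show ?thesis
  proof cases
    case 1
    then have "\<forall>p\<in>set lam. 3 \<le> p" using xa snoc by auto
    with down_T[of lam] s snoc show ?thesis by metis
  next
    case 2
    then have "\<forall>p\<in>set xs. 3 \<le> p" using xa by auto
    with down_T[of xs] sx snoc 2 show ?thesis by metis
  next
    case 3
    show ?thesis
    proof (cases xs rule: rev_exhaust)
      case Nil
      then show ?thesis using snoc 3 by (intro bexI[of _ "[]"]) (auto simp: h0_def T_iff)
    next
      case (snoc ys b)
      have sy: "sorted_wrt (>) ys" and yb: "\<forall>p\<in>set ys. b < p" using sx snoc
        by (auto simp: sorted_wrt_append)
      have "b > 1" using xa snoc 3 by auto
      then consider "b \<ge> 3" | "b = 2" by force
      then show ?thesis
      proof cases
        case 1
        then have "\<forall>p\<in>set xs. 3 \<le> p" using yb snoc by auto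
        with down_T[of xs] sx \<open>lam = xs @ [a]\<close> 3 show ?thesis by metis
      next
        case 2
        then have "\<forall>p\<in>set ys. 3 \<le> p" using yb by auto
        with down_T[of ys] sy \<open>lam = xs @ [a]\<close> snoc 2 3 show ?thesis by (metis append_Cons append_Nil append_assoc)
      qed
    qed
  qed
qed

fun cls :: "nat list \<Rightarrow> nat" where
  "cls [] = 0"
| "cls (a # r) = (if 3 \<le> a then 0 else if a = 2 then 2 else (case r of [] \<Rightarrow> 1 | b # _ \<Rightarrow> if b = 2 then 3 else 1))"

lemma cls_h0: "mu \<in> T \<Longrightarrow> cls (rev (h0 mu)) = 0"
  unfolding h0_def rev_map by (cases "rev mu") (auto simp: T_iff)

lemma cls_h2: "cls (rev (h0 mu @ [2])) = 2" by simp

lemma cls_h1: "mu \<in> T \<Longrightarrow> cls (rev (h0 mu @ [1])) = 1"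
  unfolding h0_def rev_map by (cases "rev mu") (auto simp: T_iff)

lemma cls_h21: "cls (rev (h0 mu @ [2,1])) = 3" by simp

lemma inj_h0: "inj_on (\<lambda>mu. h0 mu @ c) A"
  unfolding h0_def by (auto intro!: inj_onI simp: inj_def inj_map_eq_map)

lemma length_h0[simp]: "length (h0 mu) = length mu" by (simp add: h0_def)

definition Tp :: "(nat \<Rightarrow> bool) \<Rightarrow> nat list set" where "Tp P = {mu \<in> T. P (length mu)}"

lemma T_split:
  assumes "\<And>n. P (Suc n) = Q1 n" "\<And>n. P (Suc (Suc n)) = Q2 n"
  shows "Tp P = ((\<lambda>mu. h0 mu @ []) ` Tp P \<union> (\<lambda>mu. h0 mu @ [2]) ` Tp Q1) \<union>
     ((\<lambda>mu. h0 mu @ [1]) ` Tp Q1 \<union> (\<lambda>mu. h0 mu @ [2,1]) ` Tp Q2)"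
proof (rule set_eqI, rule iffI)
  fix lam assume "lam \<in> Tp P"
  then have l: "lam \<in> T" "P (length lam)" unfolding Tp_def by auto
  from T_decomp[OF l(1)] obtain mu where "mu \<in> T"
    "lam = h0 mu \<or> lam = h0 mu @ [2] \<or> lam = h0 mu @ [1] \<or> lam = h0 mu @ [2,1]" by blast
  then show "lam \<in> ((\<lambda>mu. h0 mu @ []) ` Tp P \<union> (\<lambda>mu. h0 mu @ [2]) ` Tp Q1) \<union>
     ((\<lambda>mu. h0 mu @ [1]) ` Tp Q1 \<union> (\<lambda>mu. h0 mu @ [2,1]) ` Tp Q2)"
    using l(2) assms unfolding Tp_def by (auto simp: h0_def)
next
  fix lam assume "lam \<in> ((\<lambda>mu. h0 mu @ []) ` Tp P \<union> (\<lambda>mu. h0 mu @ [2]) ` Tp Q1) \<union>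
     ((\<lambda>mu. h0 mu @ [1]) ` Tp Q1 \<union> (\<lambda>mu. h0 mu @ [2,1]) ` Tp Q2)"
  moreover have hs: "h0 mu @ c \<in> T" if "mu\<in>T" "c \<in> {[],[2],[1],[2,1]}" for mu c
    using h0_snoc_T[OF that(1), of c] that(2) by (auto simp: T_iff)
  ultimately show "lam \<in> Tp P" unfolding Tp_def using assms
    by (auto intro: hs h0_T)
qed

lemma disj_cls: "(\<And>x. x\<in>A \<Longrightarrow> cls (rev x) = a) \<Longrightarrow> (\<And>x. x\<in>B \<Longrightarrow> cls (rev x) = b) \<Longrightarrow> a \<noteq> b \<Longrightarrow> A \<inter> B = {}"
  by force

lemma T_disj:
  shows "(\<lambda>mu. h0 mu @ []) ` Tp P \<inter> (\<lambda>mu. h0 mu @ [2]) ` Tp Q1 = {}"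
    and "(\<lambda>mu. h0 mu @ [1]) ` Tp Q1 \<inter> (\<lambda>mu. h0 mu @ [2,1]) ` Tp Q2 = {}"
    and "((\<lambda>mu. h0 mu @ []) ` Tp P \<union> (\<lambda>mu. h0 mu @ [2]) ` Tp Q1) \<inter>
     ((\<lambda>mu. h0 mu @ [1]) ` Tp Q1 \<union> (\<lambda>mu. h0 mu @ [2,1]) ` Tp Q2) = {}"
proof -
  have c0: "cls (rev x) = 0" if "x \<in> (\<lambda>mu. h0 mu @ []) ` Tp P" for x P
    using that cls_h0 unfolding Tp_def by auto
  have c1: "cls (rev x) = 1" if "x \<in> (\<lambda>mu. h0 mu @ [1]) ` Tp P" for x P
    using that cls_h1 unfolding Tp_def by auto
  have c2: "cls (rev x) = 2" if "x \<in> (\<lambda>mu. h0 mu @ [2]) ` Tp P" for x P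
    using that cls_h2 by auto
  have c3: "cls (rev x) = 3" if "x \<in> (\<lambda>mu. h0 mu @ [2,1]) ` Tp P" for x P
    using that cls_h21 by auto
  show "(\<lambda>mu. h0 mu @ []) ` Tp P \<inter> (\<lambda>mu. h0 mu @ [2]) ` Tp Q1 = {}"
    by (rule disj_cls[OF c0 c2]) auto
  show "(\<lambda>mu. h0 mu @ [1]) ` Tp Q1 \<inter> (\<lambda>mu. h0 mu @ [2,1]) ` Tp Q2 = {}"
    by (rule disj_cls[OF c1 c3]) auto
  have "(\<lambda>mu. h0 mu @ []) ` Tp P \<inter> (\<lambda>mu. h0 mu @ [1]) ` Tp Q1 = {}"
    by (rule disj_cls[OF c0 c1]) auto
  moreover have "(\<lambda>mu. h0 mu @ [2]) ` Tp Q1 \<inter> (\<lambda>mu. h0 mu @ [1]) ` Tp Q1 = {}"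
    by (rule disj_cls[OF c2 c1]) auto
  moreover have "(\<lambda>mu. h0 mu @ []) ` Tp P \<inter> (\<lambda>mu. h0 mu @ [2,1]) ` Tp Q2 = {}"
    by (rule disj_cls[OF c0 c3]) auto
  moreover have "(\<lambda>mu. h0 mu @ [2]) ` Tp Q1 \<inter> (\<lambda>mu. h0 mu @ [2,1]) ` Tp Q2 = {}"
    by (rule disj_cls[OF c2 c3]) auto
  ultimately show "((\<lambda>mu. h0 mu @ []) ` Tp P \<union> (\<lambda>mu. h0 mu @ [2]) ` Tp Q1) \<inter>
     ((\<lambda>mu. h0 mu @ [1]) ` Tp Q1 \<union> (\<lambda>mu. h0 mu @ [2,1]) ` Tp Q2) = {}" by auto
qed




lemma T_distinct: "lam \<in> T \<Longrightarrow> distinct lam"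
  unfolding T_iff by (induction lam) auto

lemma inj_set_T: "inj_on set T"
proof (rule inj_onI)
  fix xs ys assume a: "xs \<in> T" "ys \<in> T" "set xs = set ys"
  have "sorted (rev xs)" "sorted (rev ys)" using a unfolding T_iff
    by (auto intro!: strict_sorted_imp_sorted simp: sorted_wrt_rev
        elim!: sorted_wrt_mono_rel[rotated])
  moreover have "distinct (rev xs)" "distinct (rev ys)" using T_distinct a by auto
  ultimately have "rev xs = rev ys" using a(3) by (intro sorted_distinct_set_unique) auto
  then show "xs = ys" by simp
qed

lemma summ_T:
  fixes x q :: complex
  assumes "norm q < 1"
  shows "(\<lambda>lam. x ^ length lam * q ^ wsize i lam) summable_on T"
proof -
  define r where "r = norm q"
  define c where "c = max 1 (norm x)"
  define a where "a k = c * r ^ k" for k :: nat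
  have r: "0 \<le> r" "r < 1" using assms unfolding r_def by auto
  have c: "1 \<le> c" "norm x \<le> c" unfolding c_def by auto
  have a0: "0 \<le> a k" for k unfolding a_def using r c by auto
  define B where "B = exp (c / (1 - r))"
  have bound: "(\<Sum>lam\<in>F. norm (x ^ length lam * q ^ wsize i lam)) \<le> B" if F: "finite F" "F \<subseteq> T" for F
  proof -
    define N where "N = Max (insert 0 (\<Union>lam\<in>F. set lam))"
    have fin: "finite (insert 0 (\<Union>lam\<in>F. set lam))" using F by auto
    have trm: "norm (x ^ length lam * q ^ wsize i lam) \<le> (\<Prod>k\<in>set lam. a k)" if "lam \<in> T" for lam
    proof -
      have d: "distinct lam" using T_distinct that .
      have "norm (x ^ length lam * q ^ wsize i lam) = norm x ^ length lam * r ^ wsize i lam"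
        by (simp add: norm_mult norm_power r_def)
      also have "\<dots> \<le> c ^ length lam * r ^ sum_list lam"
        by (rule mult_mono) (use c r wsize_ge in \<open>auto intro: power_mono power_decreasing\<close>)
      also have "\<dots> = (\<Prod>k\<in>set lam. a k)"
        unfolding a_def prod.distrib prod_constant power_sum[symmetric]
        using d by (simp add: distinct_card distinct_sum_list_conv_Sum)
      finally show ?thesis .
    qed
    have "(\<Sum>lam\<in>F. norm (x ^ length lam * q ^ wsize i lam)) \<le> (\<Sum>lam\<in>F. \<Prod>k\<in>set lam. a k)"
      by (rule sum_mono) (use trm F in auto)
    also have "\<dots> = (\<Sum>S\<in>set ` F. \<Prod>k\<in>S. a k)"
      by (rule sum.reindex[symmetric, unfolded comp_def]) (use inj_set_T F in \<open>auto intro: inj_on_subset\<close>)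
    also have "\<dots> \<le> (\<Sum>S\<in>Pow {1..N}. \<Prod>k\<in>S. a k)"
    proof (rule sum_mono2)
      show "set ` F \<subseteq> Pow {1..N}"
      proof
        fix S assume "S \<in> set ` F"
        then obtain lam where l: "lam \<in> F" "S = set lam" by auto
        have "lam \<in> T" using l F by auto
        then have "\<forall>p\<in>set lam. 0 < p" unfolding T_iff by auto
        moreover have "\<forall>p\<in>set lam. p \<le> N" unfolding N_def using l fin by (auto intro: Max_ge)
        ultimately show "S \<in> Pow {1..N}" using l by auto
      qed
    qed (use a0 in \<open>auto intro: prod_nonneg\<close>)
    also have "\<dots> = (\<Prod>k\<in>{1..N}. a k + 1)"
      by (subst prod_add) auto
    also have "\<dots> \<le> (\<Prod>k\<in>{1..N}. exp (a k))"
      by (rule prod_mono) (use a0 in \<open>auto simp: add.commute intro: exp_ge_add_one_self\<close>)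
    also have "\<dots> = exp (\<Sum>k\<in>{1..N}. a k)" by (simp add: exp_sum)
    also have "\<dots> \<le> B"
    proof -
      have "(\<Sum>k\<in>{1..N}. r ^ k) \<le> (\<Sum>k<Suc N. r ^ k)"
        by (rule sum_mono2) (use r in auto)
      also have "\<dots> \<le> (\<Sum>k. r ^ k)"
        by (rule sum_le_suminf) (use r in \<open>auto intro: summable_geometric\<close>)
      also have "\<dots> = 1 / (1 - r)" using r by (simp add: suminf_geometric)
      finally have "c * (\<Sum>k\<in>{1..N}. r ^ k) \<le> c * (1 / (1 - r))"
        by (rule mult_left_mono) (use c in auto)
      then have "(\<Sum>k\<in>{1..N}. a k) \<le> c / (1 - r)"
        unfolding a_def sum_distrib_left[symmetric] by simp
      then show ?thesis unfolding B_def by simp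
    qed
    finally show ?thesis .
  qed
  show ?thesis
    apply (rule abs_summable_summable)
    apply (rule nonneg_bdd_above_summable_on)
     apply simp
    using bound by (auto intro!: bdd_aboveI)
qed




definition G :: "nat \<Rightarrow> complex \<Rightarrow> complex \<Rightarrow> nat list \<Rightarrow> complex" where
  "G i q x lam = x ^ length lam * q ^ wsize i lam"

definition S :: "nat \<Rightarrow> complex \<Rightarrow> complex \<Rightarrow> (nat \<Rightarrow> bool) \<Rightarrow> complex" where
  "S i q x P = infsum (G i q x) (Tp P)"

lemma rw_2: "rw i j 2 = 3"
  using rw_SS[of i j 0] by (simp add: rw_def numeral_2_eq_2)

lemma wsize_h0: "wsize i (h0 mu) = wsize i mu + 3 * length mu"
  unfolding h0_def by (rule wsize_map2)

lemma G_h0: "G i q x (h0 mu @ []) = G i q (x * q^3) mu"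
  unfolding G_def by (simp add: wsize_h0 power_add power_mult_distrib power_mult[symmetric])

lemma G_h2: "G i q x (h0 mu @ [2]) = x * q^3 * G i q (x * q^3) mu"
  unfolding G_def by (simp add: wsize_h0 wsize_snoc rw_2 power_add power_mult_distrib power_mult[symmetric])

lemma G_h1: "G i q x (h0 mu @ [1]) = x * q^(rw i (length mu) 1) * G i q (x * q^3) mu"
  unfolding G_def by (simp add: wsize_h0 wsize_snoc power_add power_mult_distrib power_mult[symmetric])

lemma G_h21: "G i q x (h0 mu @ [2,1]) = x^2 * q^(3 + rw i (Suc (length mu)) 1) * G i q (x * q^3) mu"
proof -
  have "h0 mu @ [2,1] = (h0 mu @ [2]) @ [1]" by simp
  then have w: "wsize i (h0 mu @ [2,1]) = wsize i mu + 3 * length mu + 3 + rw i (Suc (length mu)) 1"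
    by (simp only: wsize_snoc) (simp add: wsize_h0 wsize_snoc rw_2)
  show ?thesis unfolding G_def w
    by (simp add: power_add power_mult_distrib power_mult[symmetric] power2_eq_square)
qed

lemma S_has_sum:
  assumes "norm q < 1"
  shows "(G i q x has_sum S i q x P) (Tp P)"
proof -
  have e: "G i q x = (\<lambda>lam. x^length lam * q^wsize i lam)" by (simp add: G_def fun_eq_iff)
  have "G i q x summable_on Tp P" unfolding e
    by (rule summable_on_subset_banach[OF summ_T[OF assms, of x i]]) (auto simp: Tp_def)
  then show ?thesis unfolding S_def by simp
qed

lemma rec:
  assumes q: "norm q < 1"
    and PQ: "\<And>n. P (Suc n) = Q1 n" "\<And>n. P (Suc (Suc n)) = Q2 n"
    and e: "\<And>n. Q1 n \<Longrightarrow> rw i n 1 = e1" "\<And>n. Q2 n \<Longrightarrow> rw i (Suc n) 1 = e2"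
  shows "S i q x P = S i q (x*q^3) P + x*q^3 * S i q (x*q^3) Q1 + x*q^e1 * S i q (x*q^3) Q1
           + x^2*q^(3+e2) * S i q (x*q^3) Q2"
proof -
  let ?y = "x*q^3"
  have s0: "(G i q x has_sum S i q ?y P) ((\<lambda>mu. h0 mu @ []) ` Tp P)"
    unfolding has_sum_reindex[OF inj_h0] comp_def
    by (rule has_sum_cong[THEN iffD2, OF _ S_has_sum[OF q]]) (rule G_h0)
  have s2: "(G i q x has_sum (x*q^3 * S i q ?y Q1)) ((\<lambda>mu. h0 mu @ [2]) ` Tp Q1)"
    unfolding has_sum_reindex[OF inj_h0] comp_def
    by (rule has_sum_cong[THEN iffD2, OF _ has_sum_cmult_right[OF S_has_sum[OF q]]]) (simp add: G_h2)
  have s1: "(G i q x has_sum (x*q^e1 * S i q ?y Q1)) ((\<lambda>mu. h0 mu @ [1]) ` Tp Q1)"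
    unfolding has_sum_reindex[OF inj_h0] comp_def
    by (rule has_sum_cong[THEN iffD2, OF _ has_sum_cmult_right[OF S_has_sum[OF q]]]) (use G_h1 e(1) in \<open>auto simp: Tp_def\<close>)
  have s21: "(G i q x has_sum (x^2*q^(3+e2) * S i q ?y Q2)) ((\<lambda>mu. h0 mu @ [2,1]) ` Tp Q2)"
    unfolding has_sum_reindex[OF inj_h0] comp_def
    by (rule has_sum_cong[THEN iffD2, OF _ has_sum_cmult_right[OF S_has_sum[OF q]]]) (use G_h21 e(2) in \<open>auto simp: Tp_def\<close>)
  have "(G i q x has_sum ((S i q ?y P + x*q^3 * S i q ?y Q1) + (x*q^e1 * S i q ?y Q1
           + x^2*q^(3+e2) * S i q ?y Q2))) (Tp P)"
    apply (subst T_split[of P Q1 Q2, OF PQ])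
    apply (rule has_sum_Un_disjoint)
      apply (rule has_sum_Un_disjoint[OF s0 s2 T_disj(1)])
     apply (rule has_sum_Un_disjoint[OF s1 s21 T_disj(2)])
    apply (rule T_disj(3))
    done
  then have "S i q x P = (S i q ?y P + x*q^3 * S i q ?y Q1) + (x*q^e1 * S i q ?y Q1
           + x^2*q^(3+e2) * S i q ?y Q2)"
    unfolding S_def by (rule infsumI)
  then show ?thesis by (simp add: add.assoc)
qed




lemma recU:
  assumes "norm q < 1"
  shows "S i q x (\<lambda>n. even (n+i)) = (1 + x^2*q^4) * S i q (x*q^3) (\<lambda>n. even (n+i))
     + x*(q+q^3) * S i q (x*q^3) (\<lambda>n. odd (n+i))"
proof -
  have "S i q x (\<lambda>n. even (n+i)) = S i q (x*q^3) (\<lambda>n. even (n+i)) + x*q^3 * S i q (x*q^3) (\<lambda>n. odd (n+i))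
     + x*q^1 * S i q (x*q^3) (\<lambda>n. odd (n+i)) + x^2*q^(3+1) * S i q (x*q^3) (\<lambda>n. even (n+i))"
    by (rule rec[OF assms]) (auto simp: rw_1[simplified])
  then show ?thesis by (simp add: algebra_simps)
qed

lemma recV:
  assumes "norm q < 1"
  shows "S i q x (\<lambda>n. odd (n+i)) = (1 + x^2*q^5) * S i q (x*q^3) (\<lambda>n. odd (n+i))
     + x*(q^2+q^3) * S i q (x*q^3) (\<lambda>n. even (n+i))"
proof -
  have "S i q x (\<lambda>n. odd (n+i)) = S i q (x*q^3) (\<lambda>n. odd (n+i)) + x*q^3 * S i q (x*q^3) (\<lambda>n. even (n+i))
     + x*q^2 * S i q (x*q^3) (\<lambda>n. even (n+i)) + x^2*q^(3+2) * S i q (x*q^3) (\<lambda>n. odd (n+i))"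
    by (rule rec[OF assms]) (auto simp: rw_1[simplified])
  then show ?thesis by (simp add: algebra_simps)
qed

lemma Fgen_UV:
  assumes "norm q < 1"
  shows "Fgen i x q = S i q x (\<lambda>n. even (n+i)) + S i q x (\<lambda>n. odd (n+i))"
proof -
  have T: "T = Tp (\<lambda>n. even (n+i)) \<union> Tp (\<lambda>n. odd (n+i))" unfolding Tp_def by auto
  have "(G i q x has_sum (S i q x (\<lambda>n. even (n+i)) + S i q x (\<lambda>n. odd (n+i)))) T"
    unfolding T by (rule has_sum_Un_disjoint[OF S_has_sum[OF assms] S_has_sum[OF assms]]) (auto simp: Tp_def)
  then show ?thesis unfolding Fgen_def G_def[abs_def] by (rule infsumI)
qed

theorem mainTheorem5:
  fixes i :: nat and x q :: complex
  assumes "i \<in> {1, 2}" and "norm q < 1"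
  shows "q ^ 3 * Fgen i x q =
      (1 + q^3 - x * q^3 + x * q^6 + x^2 * q^7 + x^2 * q^8) * Fgen i (x * q^3) q
      - (1 - x * q^3) * (1 + x * q^6) * (1 - x^2 * q^9) * Fgen i (x * q^6) q"
proof -
  define U where "U y = S i q y (\<lambda>n. even (n+i))" for y
  define V where "V y = S i q y (\<lambda>n. odd (n+i))" for y
  have z: "x * q^3 * q^3 = x * q^6" by (simp add: power_add[symmetric] mult.assoc)
  note qq = assms(2)
  have U1: "U x = (1 + x^2*q^4) * U (x*q^3) + x*(q+q^3) * V (x*q^3)"
    unfolding U_def V_def by (rule recU[OF qq])
  have V1: "V x = (1 + x^2*q^5) * V (x*q^3) + x*(q^2+q^3) * U (x*q^3)"
    unfolding U_def V_def by (rule recV[OF qq])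
  have U2: "U (x*q^3) = (1 + (x*q^3)^2*q^4) * U (x*q^6) + (x*q^3)*(q+q^3) * V (x*q^6)"
    unfolding U_def V_def z[symmetric] by (rule recU[OF qq])
  have V2: "V (x*q^3) = (1 + (x*q^3)^2*q^5) * V (x*q^6) + (x*q^3)*(q^2+q^3) * U (x*q^6)"
    unfolding U_def V_def z[symmetric] by (rule recV[OF qq])
  have F: "Fgen i y q = U y + V y" for y unfolding U_def V_def by (rule Fgen_UV[OF qq])
  show ?thesis unfolding F U1 V1 U2 V2 by algebra
qed


end
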